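(* With the notation of the context, for every $\lambda\in[0,1]$ the state transition matrix $\Phi(\lambda,0)=\exp\!\big(\int_0^\lambda A(\mu)\,d\mu\big)$ of the EDH flow matrix satisfies $$\Phi(\lambda,0)=I+PH^\top R^{-1/2}\big[(I+\lambda D)^{-1/2}-I\big]D^{-1}R^{-1/2}H=I+E\,\Omega(\lambda)\,F^\top,$$ where $\Omega(\lambda)=\mathrm{diag}(\omega_1(\lambda),\dots,\omega_{n_z}(\lambda))$, $\omega_i(\lambda)=\dfrac{(1+\lambda\alpha_i)^{-1/2}-1}{\alpha_i}$.
   Context: $P\in\mathbb{R}^{n_x\times n_x}$, $R\in\mathbb{R}^{n_z\times n_z}$ symmetric positive definite, $H\in\mathbb{R}^{n_z\times n_x}$ of full row rank. $R^{-1/2}$ is the inverse of the symmetric positive definite square root of $R$. The EDH flow matrix is $A(\lambda)=-\tfrac12 PH^\top(\lambda HPH^\top+R)^{-1}H$ for $\lambda\in[0,1]$. Let $D=R^{-1/2}HPH^\top R^{-1/2}=V\Lambda V^\top$ with $V$ orthogonal and $\Lambda=\mathrm{diag}(\alpha_1,\dots,\alpha_{n_z})$, $\alpha_i>0$. Define $E=PH^\top R^{-1/2}V$ and $F^\top=V^\top R^{-1/2}H$. $(I+\lambda D)^{-1/2}$ denotes the inverse of the symmetric positive definite square root of $I+\lambda D$. *)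

theory Defs
  imports "HOL-Analysis.Analysis"
begin

text \<open>Matrix powers and the matrix exponential (the product on real^n^n in the
library is componentwise, so the exponential is defined explicitly via the matrix product).\<close>
primrec mpow :: "real^'n^'n \<Rightarrow> nat \<Rightarrow> real^'n^'n" where
  "mpow M 0 = mat 1"
| "mpow M (Suc k) = M ** mpow M k"

definition mat_exp :: "real^'n^'n \<Rightarrow> real^'n^'n" where
  "mat_exp M = (\<Sum>k. (1 / fact k) *\<^sub>R mpow M k)"

definition pos_def_matrix :: "real^'n^'n \<Rightarrow> bool" where
  "pos_def_matrix M \<longleftrightarrow> transpose M = M \<and> (\<forall>x. x \<noteq> 0 \<longrightarrow> x \<bullet> (M *v x) > 0)"

definition spd_sqrt :: "real^'n^'n \<Rightarrow> real^'n^'n" where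
  "spd_sqrt M = (THE S. pos_def_matrix S \<and> S ** S = M)"

definition diag_mat :: "('n \<Rightarrow> real) \<Rightarrow> real^'n^'n" where
  "diag_mat a = (\<chi> i j. if i = j then a i else 0)"

definition edh_A :: "real^'x^'x \<Rightarrow> real^'x^'z \<Rightarrow> real^'z^'z \<Rightarrow> real \<Rightarrow> real^'x^'x" where
  "edh_A P H R lam = - ((1/2) *\<^sub>R (P ** transpose H ** matrix_inv (lam *\<^sub>R (H ** P ** transpose H) + R) ** H))"

definition edh_Phi :: "real^'x^'x \<Rightarrow> real^'x^'z \<Rightarrow> real^'z^'z \<Rightarrow> real \<Rightarrow> real^'x^'x" where
  "edh_Phi P H R lam = mat_exp (integral {0..lam} (\<lambda>mu. edh_A P H R mu))"

end

theory Submission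
  imports Defs
begin
lemma matrix_inv_eq:
  fixes A B :: "real^'n^'n"
  assumes "A ** B = mat 1"
  shows "matrix_inv A = B" "B ** A = mat 1" "invertible A"
proof -
  have BA: "B ** A = mat 1" using assms matrix_left_right_inverse by blast
  then show "B ** A = mat 1" .
  have ex: "\<exists>A'. A ** A' = mat 1 \<and> A' ** A = mat 1" using assms BA by blast
  then show "invertible A" unfolding invertible_def .
  have X: "A ** matrix_inv A = mat 1 \<and> matrix_inv A ** A = mat 1"
    unfolding matrix_inv_def by (rule someI_ex[OF ex])
  have "matrix_inv A = matrix_inv A ** (A ** B)" using assms by simp
  also have "\<dots> = B" using X by (simp add: matrix_mul_assoc)
  finally show "matrix_inv A = B" .
qed

lemma mm_add_rdistrib: "((A::real^'m^'n) + B) ** C = A ** C + B ** C"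
  by (simp add: matrix_matrix_mult_def vec_eq_iff sum.distrib distrib_right)
lemma mm_sub_rdistrib: "((A::real^'m^'n) - B) ** C = A ** C - B ** C"
  by (simp add: matrix_matrix_mult_def vec_eq_iff sum_subtractf left_diff_distrib)
lemma mm_sub_ldistrib: "(A::real^'m^'n) ** (B - C) = A ** B - A ** C"
  by (simp add: matrix_matrix_mult_def vec_eq_iff sum_subtractf right_diff_distrib)
lemma mm_scaleR_left: "(k *\<^sub>R (A::real^'m^'n)) ** B = k *\<^sub>R (A ** B)"
  by (simp add: matrix_matrix_mult_def vec_eq_iff sum_distrib_left mult_ac)
lemma mm_scaleR_right: "(A::real^'m^'n) ** (k *\<^sub>R B) = k *\<^sub>R (A ** B)"
  by (simp add: matrix_matrix_mult_def vec_eq_iff sum_distrib_left mult_ac)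
lemma mm_neg_left: "(- (A::real^'m^'n)) ** B = - (A ** B)"
  by (simp add: matrix_matrix_mult_def vec_eq_iff sum_negf)
lemma mm_neg_right: "(A::real^'m^'n) ** (- B) = - (A ** B)"
  by (simp add: matrix_matrix_mult_def vec_eq_iff sum_negf)

lemma trace_form:
  fixes X Y :: "real^'n^'n"
  shows "trace (transpose X ** Y ** X) = (\<Sum>i\<in>UNIV. column i X \<bullet> (Y *v column i X))"
  unfolding trace_def
  apply (simp add: matrix_matrix_mult_def matrix_vector_mult_def inner_vec_def column_def
      transpose_def sum_distrib_left sum_distrib_right mult_ac)
  apply (rule sum.cong[OF refl])
  apply (subst sum.swap)
  apply (simp add: mult_ac)
  done

lemma spd_unique:
  fixes S T :: "real^'n^'n"
  assumes S: "pos_def_matrix S" and T: "pos_def_matrix T" and eq: "S ** S = T ** T"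
  shows "S = T"
proof -
  define X where "X = S - T"
  define Y where "Y = S + T"
  have tX: "transpose X = X" using S T unfolding X_def pos_def_matrix_def
    by (simp add: transpose_def vec_eq_iff)
  have Ypos: "x \<bullet> (Y *v x) \<ge> 0" for x
  proof (cases "x = 0")
    case False
    then show ?thesis using S T unfolding pos_def_matrix_def Y_def
      by (smt (verit) inner_add_right matrix_vector_mult_add_rdistrib)
  qed simp
  have Ypos0: "x \<bullet> (Y *v x) = 0 \<Longrightarrow> x = 0" for x
    using S T unfolding pos_def_matrix_def Y_def
    by (smt (verit) inner_add_right matrix_vector_mult_add_rdistrib)
  have "Y ** X + X ** Y = 2 *\<^sub>R (S ** S - T ** T)"
    unfolding X_def Y_def
    by (simp add: matrix_add_ldistrib mm_add_rdistrib mm_sub_ldistrib mm_sub_rdistrib scaleR_2)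
  then have YX: "X ** Y = - (Y ** X)" using eq by (simp add: eq_neg_iff_add_eq_0 add.commute)
  have "trace (X ** Y ** X) = - trace (Y ** X ** X)"
    using YX by (simp add: mm_neg_left trace_def sum_negf)
  also have "trace (Y ** X ** X) = trace (X ** (Y ** X))"
    by (metis matrix_mul_assoc trace_mul_sym)
  finally have "trace (X ** Y ** X) = 0" by (simp add: matrix_mul_assoc)
  then have "(\<Sum>i\<in>UNIV. column i X \<bullet> (Y *v column i X)) = 0"
    using trace_form[of X Y] tX by simp
  then have "\<forall>i. column i X \<bullet> (Y *v column i X) = 0"
    using sum_nonneg_eq_0_iff[of UNIV "\<lambda>i. column i X \<bullet> (Y *v column i X)"] Ypos by simp
  then have "\<forall>i. column i X = 0" using Ypos0 by blast
  then have "X = 0" by (simp add: vec_eq_iff column_def)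
  then show ?thesis unfolding X_def by simp
qed

lemma sym_dot:
  fixes A :: "real^'n^'n"
  assumes "transpose A = A"
  shows "x \<bullet> (A *v y) = (A *v x) \<bullet> y"
  by (metis assms dot_lmul_matrix transpose_matrix_vector)

lemma quad_zero:
  fixes c d :: real
  assumes "\<forall>t. 2*t*c + t^2*d \<le> 0"
  shows "c = 0"
proof -
  define e where "e = \<bar>d\<bar> + 1"
  define t where "t = c / e"
  have p: "e > 0" unfolding e_def by simp
  have "2*t*c + t^2*d \<le> 0" using assms by blast
  then have "e^2 * (2*t*c + t^2*d) \<le> 0"
    by (simp add: mult_nonneg_nonpos)
  moreover have "e^2 * (2*t*c + t^2*d) = c^2 * (2*e + d)"
    unfolding t_def using p by (simp add: field_simps power2_eq_square)
  ultimately have "c^2 * (2*e + d) \<le> 0" by simp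
  moreover have "2*e + d > 0" unfolding e_def by (auto simp: abs_if)
  ultimately have "c^2 \<le> 0" by (simp add: mult_le_0_iff)
  then show ?thesis by simp
qed

lemma eigvec_exists:
  fixes A :: "real^'n^'n"
  assumes sym: "transpose A = A" and W: "subspace W" and ne: "W \<noteq> {0}"
    and inv: "\<forall>x\<in>W. A *v x \<in> W"
  shows "\<exists>v\<in>W. norm v = 1 \<and> (\<exists>c. A *v v = c *\<^sub>R v)"
proof -
  define K where "K = sphere (0::real^'n) 1 \<inter> W"
  have cK: "compact K" unfolding K_def by (intro compact_Int_closed compact_sphere closed_subspace W)
  obtain w where w: "w \<in> W" "w \<noteq> 0" using ne W subspace_0 by blast
  have "w /\<^sub>R norm w \<in> K" unfolding K_def using w W by (simp add: subspace_scale)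
  then have Kne: "K \<noteq> {}" by blast
  have cont: "continuous_on K (\<lambda>x. x \<bullet> (A *v x))"
    by (intro continuous_intros continuous_on_compose2[OF linear_continuous_on]) auto
  obtain v where v: "v \<in> K" and vmax: "\<forall>y\<in>K. y \<bullet> (A *v y) \<le> v \<bullet> (A *v v)"
    using continuous_attains_sup[OF cK Kne cont] by blast
  define m where "m = v \<bullet> (A *v v)"
  have vW: "v \<in> W" and nv: "norm v = 1" using v unfolding K_def by auto
  have vv: "v \<bullet> v = 1" using nv by (simp add: norm_eq_1)
  have bound: "x \<bullet> (A *v x) \<le> m * (x \<bullet> x)" if xW: "x \<in> W" for x
  proof (cases "x = 0")
    case False
    have "x /\<^sub>R norm x \<in> K" unfolding K_def using xW W False by (simp add: subspace_scale)
    then have "(x /\<^sub>R norm x) \<bullet> (A *v (x /\<^sub>R norm x)) \<le> m" using vmax m_def by blast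
    then have "(x \<bullet> (A *v x)) / (norm x)^2 \<le> m"
      by (simp add: matrix_vector_mult_scaleR power2_eq_square divide_inverse inverse_mult_distrib mult_ac)
    then show ?thesis using False by (simp add: divide_le_eq dot_square_norm)
  qed simp
  have orth: "v \<bullet> (A *v w) = 0" if wW: "w \<in> W" and vw: "v \<bullet> w = 0" for w
  proof -
    have "\<forall>t. 2*t*(v \<bullet> (A *v w)) + t^2*(w \<bullet> (A *v w) - m * (w \<bullet> w)) \<le> 0"
    proof
      fix t :: real
      have "v + t *\<^sub>R w \<in> W" using W vW wW by (simp add: subspace_add subspace_scale)
      then have "(v + t *\<^sub>R w) \<bullet> (A *v (v + t *\<^sub>R w)) \<le> m * ((v + t *\<^sub>R w) \<bullet> (v + t *\<^sub>R w))"
        by (rule bound)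
      moreover have "w \<bullet> (A *v v) = v \<bullet> (A *v w)" using sym_dot[OF sym, of w v]
        by (simp add: inner_commute)
      ultimately show "2*t*(v \<bullet> (A *v w)) + t^2*(w \<bullet> (A *v w) - m * (w \<bullet> w)) \<le> 0"
        using vw vv unfolding m_def
        by (simp add: matrix_vector_right_distrib matrix_vector_mult_scaleR inner_add_left
            inner_add_right inner_commute power2_eq_square algebra_simps)
    qed
    then show ?thesis by (rule quad_zero)
  qed
  define u where "u = A *v v - m *\<^sub>R v"
  have uW: "u \<in> W" unfolding u_def using W vW inv by (simp add: subspace_diff subspace_scale)
  have vu: "v \<bullet> u = 0" unfolding u_def m_def using vv by (simp add: inner_diff_right)
  have "u \<bullet> u = u \<bullet> (A *v v) - m * (u \<bullet> v)" unfolding u_def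
    by (simp add: inner_diff_right)
  also have "u \<bullet> (A *v v) = v \<bullet> (A *v u)" using sym_dot[OF sym, of u v]
    by (simp add: inner_commute)
  also have "\<dots> = 0" using orth[OF uW vu] .
  finally have "u \<bullet> u = 0" using vu by (simp add: inner_commute)
  then have "u = 0" by simp
  then have "A *v v = m *\<^sub>R v" unfolding u_def by simp
  then show ?thesis using vW nv by blast
qed

lemma spectral_sub:
  fixes A :: "real^'n^'n"
  assumes sym: "transpose A = A"
  shows "subspace W \<Longrightarrow> (\<forall>x\<in>W. A *v x \<in> W) \<Longrightarrow>
    \<exists>B. B \<subseteq> W \<and> pairwise orthogonal B \<and> (\<forall>b\<in>B. norm b = 1 \<and> (\<exists>c. A *v b = c *\<^sub>R b))
      \<and> span B = W"
proof (induction "dim W" arbitrary: W rule: less_induct)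
  case less
  show ?case
  proof (cases "W = {0}")
    case True
    then show ?thesis by (intro exI[of _ "{}"]) auto
  next
    case False
    obtain v m where vW: "v \<in> W" and nv: "norm v = 1" and ev: "A *v v = m *\<^sub>R v"
      using eigvec_exists[OF sym less.prems(1) False less.prems(2)] by blast
    have vv: "v \<bullet> v = 1" using nv by (simp add: norm_eq_1)
    define W' where "W' = W \<inter> {x. v \<bullet> x = 0}"
    have sW': "subspace W'" unfolding W'_def
      by (rule subspace_inter[OF less.prems(1) subspace_hyperplane])
    have iW': "\<forall>x\<in>W'. A *v x \<in> W'"
    proof
      fix x assume x: "x \<in> W'"
      have "v \<bullet> (A *v x) = (A *v v) \<bullet> x" by (rule sym_dot[OF sym])
      also have "\<dots> = 0" using x unfolding W'_def by (simp add: ev)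
      finally show "A *v x \<in> W'" using x less.prems(2) unfolding W'_def by auto
    qed
    have "v \<notin> W'" using vv unfolding W'_def by auto
    then have "W' \<subset> W" using vW unfolding W'_def by blast
    then have "dim W' < dim W" using sW' less.prems(1) by (metis dim_psubset span_eq_iff)
    then obtain B' where B': "B' \<subseteq> W'" "pairwise orthogonal B'"
      "\<forall>b\<in>B'. norm b = 1 \<and> (\<exists>c. A *v b = c *\<^sub>R b)" "span B' = W'"
      using less.hyps[OF _ sW' iW'] by blast
    have vB': "v \<notin> B'" using B'(1) vv unfolding W'_def by auto
    have po: "pairwise orthogonal (insert v B')"
      using B'(1,2) unfolding W'_def pairwise_insert orthogonal_def
      by (auto simp: inner_commute)
    have sp: "span (insert v B') = W"
    proof
      show "span (insert v B') \<subseteq> W"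
        using B'(1) vW less.prems(1) unfolding W'_def by (intro span_minimal) auto
      show "W \<subseteq> span (insert v B')"
      proof
        fix x assume xW: "x \<in> W"
        have "x - (v \<bullet> x) *\<^sub>R v \<in> W'" unfolding W'_def using xW vW vv less.prems(1)
          by (simp add: subspace_diff subspace_scale inner_diff_right)
        then have "x - (v \<bullet> x) *\<^sub>R v \<in> span (insert v B')"
          using B'(4) span_mono[of B' "insert v B'"] by auto
        moreover have "(v \<bullet> x) *\<^sub>R v \<in> span (insert v B')"
          by (simp add: span_base span_scale)
        ultimately have "(x - (v \<bullet> x) *\<^sub>R v) + (v \<bullet> x) *\<^sub>R v \<in> span (insert v B')"
          by (rule span_add)
        then show "x \<in> span (insert v B')" by simp
      qed
    qed
    have "insert v B' \<subseteq> W" using B'(1) vW unfolding W'_def by blast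
    moreover have "\<forall>b\<in>insert v B'. norm b = 1 \<and> (\<exists>c. A *v b = c *\<^sub>R b)"
      using B'(3) nv ev by blast
    ultimately show ?thesis using po sp by blast
  qed
qed

definition outer :: "real^'n \<Rightarrow> real^'n^'n" where
  "outer b = (\<chi> i j. b$i * b$j)"

lemma outer_mv: "outer b *v x = (b \<bullet> x) *\<^sub>R b"
  by (simp add: outer_def vec_eq_iff matrix_vector_mult_def inner_vec_def sum_distrib_left mult_ac)

lemma sum_mv: "finite B \<Longrightarrow> (\<Sum>b\<in>B. (f b :: real^'n^'m)) *v x = (\<Sum>b\<in>B. f b *v x)"
  by (induction B rule: finite_induct) (auto simp: matrix_vector_mult_add_rdistrib)

lemma scaleR_mv: "((k::real) *\<^sub>R (A::real^'n^'m)) *v x = k *\<^sub>R (A *v x)"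
  by (simp add: vec_eq_iff matrix_vector_mult_def sum_distrib_left mult_ac)

lemma mv_sum: "(A::real^'n^'m) *v (\<Sum>b\<in>B. f b) = (\<Sum>b\<in>B. A *v f b)"
  using linear_sum[OF matrix_vector_mul_linear, of A f B] by (simp add: o_def)

lemma spd_sqrt_exists:
  fixes R :: "real^'n^'n"
  assumes R: "pos_def_matrix R"
  shows "\<exists>S. pos_def_matrix S \<and> S ** S = R"
proof -
  have sym: "transpose R = R" using R unfolding pos_def_matrix_def by blast
  obtain B where po: "pairwise orthogonal B"
    and ev: "\<forall>b\<in>B. norm b = 1 \<and> (\<exists>c. R *v b = c *\<^sub>R b)" and sp: "span B = UNIV"
    using spectral_sub[OF sym, of UNIV] by auto
  have fin: "finite B" using po by (rule pairwise_orthogonal_imp_finite)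
  have ob: "b \<bullet> c = (if b = c then 1 else 0)" if "b \<in> B" "c \<in> B" for b c
    using that po ev by (auto simp: pairwise_def orthogonal_def norm_eq_1)
  have dsum: "c \<bullet> (\<Sum>b\<in>B. g b *\<^sub>R b) = g c" if c: "c \<in> B" for g c
  proof -
    have "c \<bullet> (\<Sum>b\<in>B. g b *\<^sub>R b) = (\<Sum>b\<in>B. g b * (c \<bullet> b))"
      by (simp add: inner_sum_right)
    also have "\<dots> = (\<Sum>b\<in>B. if b = c then g b else 0)"
      by (rule sum.cong) (use c ob in auto)
    also have "\<dots> = g c" using fin c by simp
    finally show ?thesis .
  qed
  have expand: "x = (\<Sum>b\<in>B. (b \<bullet> x) *\<^sub>R b)" for x
  proof -
    have "x \<in> span B" using sp by simp
    then obtain u where u: "x = (\<Sum>b\<in>B. u b *\<^sub>R b)" using span_finite[OF fin] by auto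
    have "\<forall>b\<in>B. b \<bullet> x = u b" using dsum u by simp
    then show ?thesis using u by (metis (no_types, lifting) sum.cong)
  qed
  define l where "l b = b \<bullet> (R *v b)" for b
  have lpos: "l b > 0" if "b \<in> B" for b
  proof -
    have "b \<noteq> 0" using ev that by auto
    then show ?thesis using R unfolding l_def pos_def_matrix_def by blast
  qed
  have Rb: "R *v b = l b *\<^sub>R b" if b: "b \<in> B" for b
  proof -
    obtain c where c: "R *v b = c *\<^sub>R b" using ev b by blast
    have "b \<bullet> b = 1" using ev b by (simp add: norm_eq_1)
    then have "l b = c" unfolding l_def c by simp
    then show ?thesis using c by simp
  qed
  define S where "S = (\<Sum>b\<in>B. sqrt (l b) *\<^sub>R outer b)"
  have Sx: "S *v x = (\<Sum>b\<in>B. (sqrt (l b) * (b \<bullet> x)) *\<^sub>R b)" for x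
    unfolding S_def by (simp add: sum_mv[OF fin] scaleR_mv outer_mv)
  have SS: "S ** S = R"
  proof -
    have "(S ** S) *v x = R *v x" for x
    proof -
      have "(S ** S) *v x = S *v (S *v x)" by (simp add: matrix_vector_mul_assoc)
      also have "\<dots> = (\<Sum>b\<in>B. (sqrt (l b) * (sqrt (l b) * (b \<bullet> x))) *\<^sub>R b)"
        unfolding Sx[of "S *v x"] by (simp add: Sx[of x] dsum)
      also have "\<dots> = (\<Sum>b\<in>B. (l b * (b \<bullet> x)) *\<^sub>R b)"
        by (rule sum.cong) (use lpos in \<open>auto simp: less_imp_le\<close>)
      also have "\<dots> = R *v (\<Sum>b\<in>B. (b \<bullet> x) *\<^sub>R b)"
        by (simp add: mv_sum matrix_vector_mult_scaleR Rb mult.commute)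
      also have "\<dots> = R *v x" using expand[of x] by simp
      finally show ?thesis .
    qed
    then show ?thesis by (simp add: matrix_eq)
  qed
  have tS: "transpose S = S"
    unfolding S_def by (simp add: vec_eq_iff transpose_def sum_component outer_def mult.commute)
  have pS: "x \<bullet> (S *v x) > 0" if "x \<noteq> 0" for x
  proof -
    obtain c where c: "c \<in> B" "c \<bullet> x \<noteq> 0"
    proof (rule ccontr)
      assume "\<not> thesis"
      then have "\<forall>b\<in>B. b \<bullet> x = 0" using that by blast
      then have "x = 0" using expand[of x] by simp
      then show False using \<open>x \<noteq> 0\<close> by simp
    qed
    have "x \<bullet> (S *v x) = (\<Sum>b\<in>B. sqrt (l b) * (b \<bullet> x)^2)"
      by (simp add: Sx inner_sum_right power2_eq_square inner_commute mult_ac)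
    also have "\<dots> > 0"
      using c lpos fin by (intro sum_pos2[of B c]) (auto simp: less_imp_le)
    finally show ?thesis .
  qed
  have "pos_def_matrix S" unfolding pos_def_matrix_def using tS pS by simp
  then show ?thesis using SS by (intro exI[of _ S]) simp
qed

lemma spd_sqrt_eq:
  assumes "pos_def_matrix S" "S ** S = M"
  shows "spd_sqrt M = S"
  unfolding spd_sqrt_def
  by (rule the_equality) (use assms spd_unique in auto)

lemma spd_sqrt_props:
  assumes "pos_def_matrix (R::real^'n^'n)"
  shows "pos_def_matrix (spd_sqrt R)" "spd_sqrt R ** spd_sqrt R = R"
proof -
  obtain S where S: "pos_def_matrix S" "S ** S = R" using spd_sqrt_exists[OF assms] by blast
  have "spd_sqrt R = S" using spd_sqrt_eq[OF S] .
  then show "pos_def_matrix (spd_sqrt R)" "spd_sqrt R ** spd_sqrt R = R" using S by simp_all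
qed

lemma diag_mult: "diag_mat a ** diag_mat b = diag_mat (\<lambda>i. a i * b i)"
  unfolding diag_mat_def matrix_matrix_mult_def vec_eq_iff by (auto simp: mult_delta_left mult_delta_right)

lemma diag_one: "diag_mat (\<lambda>_. 1) = mat 1"
  by (simp add: diag_mat_def mat_def)

lemma diag_add: "diag_mat a + diag_mat b = diag_mat (\<lambda>i. a i + b i)"
  by (simp add: vec_eq_iff diag_mat_def)

lemma diag_diff: "diag_mat a - diag_mat b = diag_mat (\<lambda>i. a i - b i)"
  by (simp add: vec_eq_iff diag_mat_def)

lemma diag_scale: "k *\<^sub>R diag_mat a = diag_mat (\<lambda>i. k * a i)"
  by (simp add: vec_eq_iff diag_mat_def)

lemma diag_transpose: "transpose (diag_mat a) = diag_mat a"
  by (simp add: vec_eq_iff diag_mat_def transpose_def)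

definition Qm :: "real^'n^'n \<Rightarrow> ('n \<Rightarrow> real) \<Rightarrow> real^'n^'n" where
  "Qm V f = V ** diag_mat f ** transpose V"

lemma orth_props:
  assumes "orthogonal_matrix V"
  shows "transpose V ** V = mat 1" "V ** transpose V = mat 1"
  using assms unfolding orthogonal_matrix_def by auto

lemma Qm_mult:
  assumes V: "orthogonal_matrix V"
  shows "Qm V f ** Qm V g = Qm V (\<lambda>i. f i * g i)"
proof -
  have "Qm V f ** Qm V g = V ** (diag_mat f ** ((transpose V ** V) ** (diag_mat g ** transpose V)))"
    unfolding Qm_def by (simp only: matrix_mul_assoc)
  also have "\<dots> = V ** (diag_mat f ** diag_mat g) ** transpose V"
    using orth_props[OF V] by (simp add: matrix_mul_assoc)
  finally show ?thesis unfolding Qm_def diag_mult .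
qed

lemma Qm_one:
  assumes V: "orthogonal_matrix V"
  shows "Qm V (\<lambda>_. 1) = mat 1"
  unfolding Qm_def diag_one using orth_props[OF V] by simp

lemma Qm_add: "Qm V f + Qm V g = Qm V (\<lambda>i. f i + g i)"
  unfolding Qm_def by (simp add: matrix_add_ldistrib mm_add_rdistrib diag_add[symmetric])

lemma Qm_diff: "Qm V f - Qm V g = Qm V (\<lambda>i. f i - g i)"
  unfolding Qm_def by (simp add: mm_sub_ldistrib mm_sub_rdistrib diag_diff[symmetric])

lemma Qm_scale: "k *\<^sub>R Qm V f = Qm V (\<lambda>i. k * f i)"
  unfolding Qm_def by (simp add: mm_scaleR_left mm_scaleR_right diag_scale[symmetric])

lemma Qm_inv:
  assumes V: "orthogonal_matrix V" and f: "\<forall>i. f i \<noteq> 0"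
  shows "matrix_inv (Qm V f) = Qm V (\<lambda>i. 1 / f i)"
proof (rule matrix_inv_eq(1))
  show "Qm V f ** Qm V (\<lambda>i. 1 / f i) = mat 1"
    using f by (simp add: Qm_mult[OF V] Qm_one[OF V])
qed

lemma Qm_transpose: "transpose (Qm V f) = Qm V f"
  unfolding Qm_def by (simp add: matrix_transpose_mul diag_transpose matrix_mul_assoc)

lemma diag_quad: "x \<bullet> (diag_mat f *v x) = (\<Sum>i\<in>UNIV. f i * (x$i)^2)"
  by (simp add: inner_vec_def matrix_vector_mult_def diag_mat_def if_distrib if_distribR
      sum.delta power2_eq_square mult_ac cong: if_cong)

lemma Qm_pd:
  assumes V: "orthogonal_matrix V" and f: "\<forall>i. f i > 0"
  shows "pos_def_matrix (Qm V f)"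
  unfolding pos_def_matrix_def
proof (intro conjI allI impI)
  show "transpose (Qm V f) = Qm V f" by (rule Qm_transpose)
  fix x :: "real^'a" assume x: "x \<noteq> 0"
  define y where "y = transpose V *v x"
  have "y \<noteq> 0"
  proof
    assume "y = 0"
    then have "V *v y = 0" by simp
    then have "x = 0" using orth_props(2)[OF V] unfolding y_def
      by (metis matrix_vector_mul_assoc matrix_vector_mul_lid)
    then show False using x by simp
  qed
  then obtain i where i: "y $ i \<noteq> 0" by (auto simp: vec_eq_iff)
  have e1: "Qm V f *v x = V *v (diag_mat f *v y)" unfolding Qm_def y_def
    by (simp only: matrix_vector_mul_assoc matrix_mul_assoc)
  have e2: "(transpose V *v x) \<bullet> z = x \<bullet> (V *v z)" for z by (simp add: dot_lmul_matrix)
  have "x \<bullet> (Qm V f *v x) = y \<bullet> (diag_mat f *v y)"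
    unfolding e1 y_def e2 ..
  also have "\<dots> = (\<Sum>i\<in>UNIV. f i * (y$i)^2)" by (rule diag_quad)
  also have "\<dots> > 0"
  proof (rule sum_pos2[of UNIV i])
    show "0 < f i * (y $ i)\<^sup>2" using f i by simp
    show "0 \<le> f j * (y $ j)\<^sup>2" if "j \<in> UNIV" for j using f by (metis less_imp_le zero_le_power2 mult_nonneg_nonneg)
  qed simp_all
  finally show "x \<bullet> (Qm V f *v x) > 0" .
qed

lemma pd_invertible:
  fixes S :: "real^'n^'n"
  assumes "pos_def_matrix S"
  shows "S ** matrix_inv S = mat 1" "matrix_inv S ** S = mat 1"
proof -
  have "inj ((*v) S)"
  proof (rule injI)
    fix x y assume "S *v x = S *v y"
    then have "S *v (x - y) = 0" by (simp add: matrix_vector_mult_diff_distrib)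
    then have "(x - y) \<bullet> (S *v (x - y)) = 0" by simp
    then show "x = y" using assms unfolding pos_def_matrix_def by (metis eq_iff_diff_eq_0 less_irrefl)
  qed
  then obtain B where "B ** S = mat 1" using matrix_left_invertible_injective by blast
  then have "S ** B = mat 1" using matrix_left_right_inverse by blast
  then show "S ** matrix_inv S = mat 1" "matrix_inv S ** S = mat 1"
    using matrix_inv_eq by metis+
qed

lemma mm_zero_left: "(0::real^'m^'n) ** B = 0"
  by (simp add: matrix_matrix_mult_def vec_eq_iff)
lemma mm_zero_right: "(A::real^'m^'n) ** 0 = 0"
  by (simp add: matrix_matrix_mult_def vec_eq_iff)

lemma mm_sum_left: "finite I \<Longrightarrow> (\<Sum>i\<in>I. f i :: real^'m^'n) ** B = (\<Sum>i\<in>I. f i ** B)"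
  by (induction I rule: finite_induct) (simp_all add: mm_zero_left mm_add_rdistrib)
lemma mm_sum_right: "finite I \<Longrightarrow> (A::real^'m^'n) ** (\<Sum>i\<in>I. f i) = (\<Sum>i\<in>I. A ** f i)"
  by (induction I rule: finite_induct) (simp_all add: mm_zero_right matrix_add_ldistrib)

lemma diag_sum: "diag_mat g = (\<Sum>i\<in>UNIV. g i *\<^sub>R diag_mat (\<lambda>j. if j = i then 1 else 0))"
  unfolding diag_mat_def vec_eq_iff by (auto simp: sum_component mult_delta_right)

lemma EgF: "(E::real^'z^'x) ** diag_mat g ** (F::real^'y^'z)
   = (\<Sum>i\<in>UNIV. g i *\<^sub>R (E ** diag_mat (\<lambda>j. if j = i then 1 else 0) ** F))"
  apply (subst diag_sum)
  apply (simp add: mm_sum_left mm_sum_right mm_scaleR_left mm_scaleR_right)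
  done

lemma int_scalar:
  fixes a lam :: real
  assumes a: "a > 0" and lam: "lam \<ge> 0"
  shows "((\<lambda>mu. 1 / (1 + mu * a)) has_integral (ln (1 + lam * a) / a)) {0..lam}"
proof -
  have "((\<lambda>mu. 1 / (1 + mu * a)) has_integral ((\<lambda>x. ln (1 + x * a) / a) lam - (\<lambda>x. ln (1 + x * a) / a) 0)) {0..lam}"
  proof (rule fundamental_theorem_of_calculus[OF lam])
    fix x assume x: "x \<in> {0..lam}"
    then have pos: "1 + x * a > 0" using a by (simp add: add_pos_nonneg)
    have "((\<lambda>x. ln (1 + x * a) / a) has_real_derivative (1 / (1 + x * a))) (at x)"
    proof -
      have "a * a + a * (a * (a * x)) = (a * a) * (1 + a * x)" by (simp add: algebra_simps)
      moreover have "(a * a) * (1 + a * x) > 0" using pos a by (simp add: mult.commute)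
      ultimately have nz: "a * a + a * (a * (a * x)) \<noteq> 0" by (metis less_irrefl)
      show ?thesis using pos a nz by (auto intro!: derivative_eq_intros simp: field_simps)
    qed
    then show "((\<lambda>x. ln (1 + x * a) / a) has_vector_derivative (1 / (1 + x * a))) (at x within {0..lam})"
      by (simp add: has_real_derivative_iff_has_vector_derivative has_vector_derivative_at_within)
  qed
  then show ?thesis by simp
qed

lemma exp_sums_shift:
  fixes x a :: real
  shows "(\<lambda>n. x ^ Suc n / fact (Suc n) / a) sums ((exp x - 1) / a)"
proof -
  have "(\<lambda>n. x^n /\<^sub>R fact n) sums exp x" by (rule exp_converges)
  then have "(\<lambda>n. x^n / fact n) sums (exp x - 1 + 1)" by (simp add: divide_inverse mult.commute)
  then have "(\<lambda>n. x^ Suc n / fact (Suc n)) sums (exp x - 1)"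
    using sums_Suc_iff[of "\<lambda>n. x^n / fact n" "exp x - 1"] by simp
  then show ?thesis by (rule sums_divide)
qed

lemma exp_half_ln:
  fixes y :: real assumes "y > 0"
  shows "exp (- (1/2) * ln y) = 1 / sqrt y"
proof -
  have "sqrt y = exp (ln y / 2)"
  proof (rule real_sqrt_unique)
    show "(exp (ln y / 2))\<^sup>2 = y" using assms
      by (simp add: power2_eq_square exp_add[symmetric])
  qed simp
  then show ?thesis by (simp add: exp_minus inverse_eq_divide)
qed

theorem mainTheorem2:
  fixes P :: "real^'x^'x" and R :: "real^'z^'z" and H :: "real^'x^'z"
    and D V :: "real^'z^'z" and \<alpha> :: "'z \<Rightarrow> real"
    and E :: "real^'z^'x" and Ft :: "real^'x^'z" and lam :: real
  assumes P: "pos_def_matrix P" and R: "pos_def_matrix R"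
    and H: "rank H = CARD('z)"
    and D: "D = matrix_inv (spd_sqrt R) ** H ** P ** transpose H ** matrix_inv (spd_sqrt R)"
    and V: "orthogonal_matrix V"
    and eig: "D = V ** diag_mat \<alpha> ** transpose V"
    and \<alpha>: "\<forall>i. \<alpha> i > 0"
    and E: "E = P ** transpose H ** matrix_inv (spd_sqrt R) ** V"
    and Ft: "Ft = transpose V ** matrix_inv (spd_sqrt R) ** H"
    and lam: "lam \<in> {0..1}"
  shows "edh_Phi P H R lam
           = mat 1 + P ** transpose H ** matrix_inv (spd_sqrt R)
               ** (matrix_inv (spd_sqrt (mat 1 + lam *\<^sub>R D)) - mat 1)
               ** matrix_inv D ** matrix_inv (spd_sqrt R) ** H
         \<and> edh_Phi P H R lam
           = mat 1 + E ** diag_mat (\<lambda>i. (1 / sqrt (1 + lam * \<alpha> i) - 1) / \<alpha> i) ** Ft"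
proof -
  define S where "S = spd_sqrt R"
  define Si where "Si = matrix_inv S"
  have SP: "pos_def_matrix S" and SS: "S ** S = R" unfolding S_def using spd_sqrt_props[OF R] by auto
  have inv1: "S ** Si = mat 1" and inv2: "Si ** S = mat 1" unfolding Si_def using pd_invertible[OF SP] by auto
  have Vo1: "transpose V ** V = mat 1" and Vo2: "V ** transpose V = mat 1" using orth_props[OF V] by auto
  have lam0: "lam \<ge> 0" using lam by simp
  have anz: "\<alpha> i \<noteq> 0" for i using \<alpha> by (metis less_irrefl)
  have DQ: "D = Qm V \<alpha>" unfolding Qm_def eig ..
  define G where "G = H ** P ** transpose H"
  have Dform: "D = Si ** G ** Si" unfolding D G_def Si_def S_def by (simp only: matrix_mul_assoc)
  have SDS: "S ** D ** S = G"
  proof -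
    have "S ** D ** S = (S ** Si) ** G ** (Si ** S)" unfolding Dform by (simp only: matrix_mul_assoc)
    then show ?thesis using inv1 inv2 by simp
  qed
  have FE: "Ft ** E = diag_mat \<alpha>"
  proof -
    have "Ft ** E = transpose V ** D ** V" unfolding Ft E Dform G_def Si_def S_def
      by (simp only: matrix_mul_assoc)
    also have "\<dots> = (transpose V ** V) ** diag_mat \<alpha> ** (transpose V ** V)"
      unfolding eig by (simp only: matrix_mul_assoc)
    finally show ?thesis using Vo1 by simp
  qed
  have Aform: "edh_A P H R mu = E ** diag_mat (\<lambda>i. - (1/2) * (1 / (1 + mu * \<alpha> i))) ** Ft"
    if mu: "mu \<ge> 0" for mu
  proof -
    have pos: "\<forall>i. 1 + mu * \<alpha> i > 0"
      using mu \<alpha> by (metis add_pos_nonneg less_imp_le mult_nonneg_nonneg zero_less_one)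
    have Q1: "Qm V (\<lambda>i. 1 + mu * \<alpha> i) = mat 1 + mu *\<^sub>R D"
      unfolding DQ Qm_scale Qm_one[OF V, symmetric] Qm_add ..
    have M: "mu *\<^sub>R G + R = S ** Qm V (\<lambda>i. 1 + mu * \<alpha> i) ** S"
      unfolding Q1 SDS[symmetric] SS[symmetric]
      by (simp add: matrix_add_ldistrib mm_add_rdistrib mm_scaleR_left mm_scaleR_right add.commute)
    have "(S ** Qm V (\<lambda>i. 1 + mu * \<alpha> i) ** S) ** (Si ** Qm V (\<lambda>i. 1 / (1 + mu * \<alpha> i)) ** Si)
        = S ** (Qm V (\<lambda>i. 1 + mu * \<alpha> i) ** ((S ** Si) ** Qm V (\<lambda>i. 1 / (1 + mu * \<alpha> i)))) ** Si"
      by (simp only: matrix_mul_assoc)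
    also have "\<dots> = mat 1"
    proof -
      have nz: "1 + mu * \<alpha> i \<noteq> 0" for i using pos by (metis less_irrefl)
      show ?thesis using nz inv1 by (simp add: Qm_mult[OF V] Qm_one[OF V])
    qed
    finally have "matrix_inv (mu *\<^sub>R G + R) = Si ** Qm V (\<lambda>i. 1 / (1 + mu * \<alpha> i)) ** Si"
      unfolding M by (rule matrix_inv_eq(1))
    then have "edh_A P H R mu = - ((1/2) *\<^sub>R (P ** transpose H ** (Si ** Qm V (\<lambda>i. 1 / (1 + mu * \<alpha> i)) ** Si) ** H))"
      unfolding edh_A_def G_def by simp
    also have "P ** transpose H ** (Si ** Qm V (\<lambda>i. 1 / (1 + mu * \<alpha> i)) ** Si) ** H
        = E ** diag_mat (\<lambda>i. 1 / (1 + mu * \<alpha> i)) ** Ft"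
      unfolding E Ft Qm_def Si_def S_def by (simp only: matrix_mul_assoc)
    also have "- ((1/2) *\<^sub>R (E ** diag_mat (\<lambda>i. 1 / (1 + mu * \<alpha> i)) ** Ft))
       = E ** diag_mat (\<lambda>i. - (1/2) * (1 / (1 + mu * \<alpha> i))) ** Ft"
      by (simp only: diag_scale[symmetric] mm_scaleR_left mm_scaleR_right scaleR_minus_left mm_neg_left mm_neg_right)
    finally show ?thesis .
  qed
  define Mi where "Mi i = E ** diag_mat (\<lambda>j. if j = i then 1 else 0) ** Ft" for i
  define c where "c i = - (1/2) * (ln (1 + lam * \<alpha> i) / \<alpha> i)" for i
  have "((\<lambda>mu. \<Sum>i\<in>UNIV. (- (1/2) * (1 / (1 + mu * \<alpha> i))) *\<^sub>R Mi i) has_integral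
      (\<Sum>i\<in>UNIV. c i *\<^sub>R Mi i)) {0..lam}"
  proof (rule has_integral_sum)
    fix i :: 'z
    have "((\<lambda>mu. 1 / (1 + mu * \<alpha> i)) has_integral (ln (1 + lam * \<alpha> i) / \<alpha> i)) {0..lam}"
      using \<alpha> lam0 by (intro int_scalar) auto
    then have "((\<lambda>mu. - (1/2) * (1 / (1 + mu * \<alpha> i))) has_integral c i) {0..lam}"
      unfolding c_def by (rule has_integral_mult_right)
    then show "((\<lambda>mu. (- (1/2) * (1 / (1 + mu * \<alpha> i))) *\<^sub>R Mi i) has_integral c i *\<^sub>R Mi i) {0..lam}"
      by (rule has_integral_scaleR_left)
  qed simp
  moreover have Aeq: "edh_A P H R mu = (\<Sum>i\<in>UNIV. (- (1/2) * (1 / (1 + mu * \<alpha> i))) *\<^sub>R Mi i)"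
    if "mu \<in> {0..lam}" for mu
  proof -
    have "mu \<ge> 0" using that by simp
    then have "edh_A P H R mu = E ** diag_mat (\<lambda>i. - (1/2) * (1 / (1 + mu * \<alpha> i))) ** Ft"
      by (rule Aform)
    also have "\<dots> = (\<Sum>i\<in>UNIV. (- (1/2) * (1 / (1 + mu * \<alpha> i))) *\<^sub>R Mi i)"
      unfolding Mi_def by (rule EgF)
    finally show ?thesis .
  qed
  ultimately have "((\<lambda>mu. edh_A P H R mu) has_integral (\<Sum>i\<in>UNIV. c i *\<^sub>R Mi i)) {0..lam}"
    using has_integral_cong[of "{0..lam}" "\<lambda>mu. edh_A P H R mu"
        "\<lambda>mu. \<Sum>i\<in>UNIV. (- (1/2) * (1 / (1 + mu * \<alpha> i))) *\<^sub>R Mi i"] by blast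
  moreover have "(\<Sum>i\<in>UNIV. c i *\<^sub>R Mi i) = E ** diag_mat c ** Ft"
    unfolding Mi_def by (rule EgF[symmetric])
  ultimately have "((\<lambda>mu. edh_A P H R mu) has_integral (E ** diag_mat c ** Ft)) {0..lam}"
    by simp
  then have INT: "integral {0..lam} (\<lambda>mu. edh_A P H R mu) = E ** diag_mat c ** Ft"
    by (rule integral_unique)
  define M0 where "M0 = E ** diag_mat c ** Ft"
  have pow: "mpow M0 (Suc k) = E ** diag_mat (\<lambda>i. c i * (c i * \<alpha> i) ^ k) ** Ft" for k
  proof (induction k)
    case 0
    then show ?case unfolding M0_def by simp
  next
    case (Suc k)
    have "mpow M0 (Suc (Suc k)) = M0 ** mpow M0 (Suc k)" by simp
    also have "\<dots> = E ** diag_mat c ** (Ft ** E) ** diag_mat (\<lambda>i. c i * (c i * \<alpha> i) ^ k) ** Ft"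
      apply (subst Suc.IH)
      apply (simp only: M0_def matrix_mul_assoc)
      done
    also have "\<dots> = E ** (diag_mat c ** diag_mat \<alpha> ** diag_mat (\<lambda>i. c i * (c i * \<alpha> i) ^ k)) ** Ft"
      unfolding FE by (simp only: matrix_mul_assoc)
    also have "\<dots> = E ** diag_mat (\<lambda>i. c i * (c i * \<alpha> i) ^ Suc k) ** Ft"
      by (simp add: diag_mult mult_ac)
    finally show ?case .
  qed
  define w where "w i = (exp (c i * \<alpha> i) - 1) / \<alpha> i" for i
  define f where "f k = (1 / fact k) *\<^sub>R mpow M0 k" for k
  have fS: "f (Suc n) = (\<Sum>i\<in>UNIV. ((c i * \<alpha> i) ^ Suc n / fact (Suc n) / \<alpha> i) *\<^sub>R Mi i)" for n
  proof -
    have "f (Suc n) = E ** diag_mat (\<lambda>i. (1 / fact (Suc n)) * (c i * (c i * \<alpha> i) ^ n)) ** Ft"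
      unfolding f_def pow by (simp only: diag_scale[symmetric] mm_scaleR_left mm_scaleR_right)
    also have "(\<lambda>i. (1 / fact (Suc n)) * (c i * (c i * \<alpha> i) ^ n)) = (\<lambda>i. (c i * \<alpha> i) ^ Suc n / fact (Suc n) / \<alpha> i)"
    proof (rule ext)
      fix i
      have a: "\<alpha> i \<noteq> 0" by (rule anz)
      have "(c i * \<alpha> i) ^ Suc n = \<alpha> i * (c i * (c i * \<alpha> i) ^ n)" by (simp add: mult_ac)
      then have "(c i * \<alpha> i) ^ Suc n / fact (Suc n) / \<alpha> i = \<alpha> i * (c i * (c i * \<alpha> i) ^ n) / \<alpha> i / fact (Suc n)"
        by simp
      also have "\<dots> = (c i * (c i * \<alpha> i) ^ n) / fact (Suc n)" using a by simp
      finally show "(1 / fact (Suc n)) * (c i * (c i * \<alpha> i) ^ n) = (c i * \<alpha> i) ^ Suc n / fact (Suc n) / \<alpha> i"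
        by simp
    qed
    also have "E ** diag_mat (\<lambda>i. (c i * \<alpha> i) ^ Suc n / fact (Suc n) / \<alpha> i) ** Ft
       = (\<Sum>i\<in>UNIV. ((c i * \<alpha> i) ^ Suc n / fact (Suc n) / \<alpha> i) *\<^sub>R Mi i)"
      unfolding Mi_def by (rule EgF)
    finally show ?thesis .
  qed
  have wsum: "(\<Sum>i\<in>UNIV. w i *\<^sub>R Mi i) = E ** diag_mat w ** Ft"
    unfolding Mi_def by (rule EgF[symmetric])
  have "(\<lambda>n. f (Suc n)) sums (\<Sum>i\<in>UNIV. w i *\<^sub>R Mi i)"
    unfolding fS w_def by (intro sums_sum sums_scaleR_left exp_sums_shift)
  then have "f sums (E ** diag_mat w ** Ft + mat 1)"
    unfolding sums_Suc_iff wsum by (simp add: f_def)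
  then have EXP: "edh_Phi P H R lam = mat 1 + E ** diag_mat w ** Ft"
    unfolding edh_Phi_def INT M0_def[symmetric] mat_exp_def f_def[symmetric]
    by (simp add: sums_unique[symmetric] add.commute)
  have wform: "w = (\<lambda>i. (1 / sqrt (1 + lam * \<alpha> i) - 1) / \<alpha> i)"
  proof
    fix i
    have a: "\<alpha> i > 0" using \<alpha> by blast
    have e1: "c i * \<alpha> i = - (1/2) * ln (1 + lam * \<alpha> i)" unfolding c_def using a by simp
    have "1 + lam * \<alpha> i > 0"
      using a lam0 by (metis add_pos_nonneg less_imp_le mult_nonneg_nonneg zero_less_one)
    then have e2: "exp (c i * \<alpha> i) = 1 / sqrt (1 + lam * \<alpha> i)" unfolding e1 by (rule exp_half_ln)
    show "w i = (1 / sqrt (1 + lam * \<alpha> i) - 1) / \<alpha> i"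
      unfolding w_def e2 ..
  qed
  have conj2: "edh_Phi P H R lam = mat 1 + E ** diag_mat (\<lambda>i. (1 / sqrt (1 + lam * \<alpha> i) - 1) / \<alpha> i) ** Ft"
    using EXP wform by simp
  have pos: "\<forall>i. 1 + lam * \<alpha> i > 0"
    using lam0 \<alpha> by (metis add_pos_nonneg less_imp_le mult_nonneg_nonneg zero_less_one)
  have pnz: "1 + lam * \<alpha> i \<noteq> 0" for i using pos by (metis less_irrefl)
  have pge: "0 \<le> 1 + lam * \<alpha> i" for i using pos by (metis less_imp_le)
  have X: "mat 1 + lam *\<^sub>R D = Qm V (\<lambda>i. sqrt (1 + lam * \<alpha> i)) ** Qm V (\<lambda>i. sqrt (1 + lam * \<alpha> i))"
    unfolding Qm_mult[OF V] DQ Qm_scale Qm_one[OF V, symmetric] Qm_add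
    using pge by (simp add: abs_of_nonneg)
  have sq: "spd_sqrt (mat 1 + lam *\<^sub>R D) = Qm V (\<lambda>i. sqrt (1 + lam * \<alpha> i))"
    unfolding X using pos by (intro spd_sqrt_eq Qm_pd[OF V]) auto
  have inv_sq: "matrix_inv (spd_sqrt (mat 1 + lam *\<^sub>R D)) = Qm V (\<lambda>i. 1 / sqrt (1 + lam * \<alpha> i))"
    unfolding sq using pnz by (intro Qm_inv[OF V]) auto
  have invD: "matrix_inv D = Qm V (\<lambda>i. 1 / \<alpha> i)"
    unfolding DQ using anz by (intro Qm_inv[OF V]) auto
  have "P ** transpose H ** Si ** (matrix_inv (spd_sqrt (mat 1 + lam *\<^sub>R D)) - mat 1) ** matrix_inv D ** Si ** H
      = P ** transpose H ** Si ** ((Qm V (\<lambda>i. 1 / sqrt (1 + lam * \<alpha> i)) - Qm V (\<lambda>_. 1)) ** Qm V (\<lambda>i. 1 / \<alpha> i)) ** Si ** H"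
    unfolding inv_sq invD Qm_one[OF V] by (simp only: matrix_mul_assoc)
  also have "\<dots> = P ** transpose H ** Si ** Qm V (\<lambda>i. (1 / sqrt (1 + lam * \<alpha> i) - 1) / \<alpha> i) ** Si ** H"
    unfolding Qm_diff Qm_mult[OF V] by simp
  also have "\<dots> = E ** diag_mat (\<lambda>i. (1 / sqrt (1 + lam * \<alpha> i) - 1) / \<alpha> i) ** Ft"
    unfolding E Ft Qm_def Si_def S_def by (simp only: matrix_mul_assoc)
  finally have conj1: "edh_Phi P H R lam = mat 1 + P ** transpose H ** matrix_inv (spd_sqrt R)
               ** (matrix_inv (spd_sqrt (mat 1 + lam *\<^sub>R D)) - mat 1)
               ** matrix_inv D ** matrix_inv (spd_sqrt R) ** H"
    using conj2 unfolding Si_def S_def by simp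
  show ?thesis using conj1 conj2 by blast
qed

end
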